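(* Let $0<p_0,q_0,p,q<\infty$ and suppose that one of the following holds: (a) $q>q_0$ and $q/p=q_0/p_0$; or (b) $q=q_0$ and $p>p_0$. Let $f,g$ be measurable functions on a $\sigma$-finite measure space such that there exists $\tau_0\in(0,\infty)$ with $\lambda_f(\tau)\le\lambda_g(\tau)$ for $\tau<\tau_0$ and $\lambda_f(\tau)\ge\lambda_g(\tau)$ for $\tau>\tau_0$. Suppose that the integral $\int_0^\infty (f^*(t)^{q_0}-g^*(t)^{q_0})\,d(t^{q_0/p_0})$ exists and is $\ge 0$, and that $(f^*(t)^q-g^*(t)^q)\,t^{q/p-1}\in L^1(0,\infty)$. Then \[ \int_0^\infty (f^*(t)^q-g^*(t)^q)\,d(t^{q/p})\ge 0 . \] Consequently, if moreover $f,g\in L(p,q)$, then $\|g\|_{L(p,q)}\le\|f\|_{L(p,q)}$.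
   Context: $\lambda_f(\tau)=\mu\{|f|>\tau\}$ and $f^*(s)=\inf\{\tau>0:\lambda_f(\tau)\le s\}$ for $s>0$. For $a>0$, $\int_0^\infty h(t)\,d(t^a)$ means $a\int_0^\infty h(t)t^{a-1}\,dt$. For $0<p,q<\infty$ the Lorentz quasi-norm is $\|f\|_{L(p,q)}=\bigl(\int_0^\infty f^*(s)^q\,d(s^{q/p})\bigr)^{1/q}=\bigl(\int_0^\infty\lambda_f(s)^{q/p}\,d(s^q)\bigr)^{1/q}$, and $L(p,q)$ is the set of $f$ with finite quasi-norm. *)

theory Defs
  imports "HOL-Analysis.Analysis"
begin

definition distr_fun :: "'a measure \<Rightarrow> ('a \<Rightarrow> 'b::real_normed_vector) \<Rightarrow> real \<Rightarrow> ennreal" where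
  "distr_fun M f \<tau> = emeasure M {x \<in> space M. \<tau> < norm (f x)}"

text \<open>Decreasing rearrangement f^*(s) = inf{tau > 0 : lambda_f(tau) <= s}, valued in [0,infinity]
  (the infimum of the empty set is infinity).\<close>
definition rearr :: "'a measure \<Rightarrow> ('a \<Rightarrow> 'b::real_normed_vector) \<Rightarrow> real \<Rightarrow> ennreal" where
  "rearr M f s = Inf (ennreal ` {\<tau>::real. 0 < \<tau> \<and> distr_fun M f \<tau> \<le> ennreal s})"

text \<open>Real power of an extended nonnegative real (exponent a > 0 intended), infinity ^ a = infinity.\<close>
definition epowr :: "ennreal \<Rightarrow> real \<Rightarrow> ennreal" where
  "epowr x a = (if x = \<infinity> then \<infinity> else ennreal (enn2real x powr a))"

text \<open>The quantity  int_0^infinity f^*(s)^q d(s^(q/p)).\<close>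
definition lorentz_integral :: "real \<Rightarrow> real \<Rightarrow> 'a measure \<Rightarrow> ('a \<Rightarrow> 'b::real_normed_vector) \<Rightarrow> ennreal" where
  "lorentz_integral p q M f =
     (\<integral>\<^sup>+ t. indicator {0<..} t * epowr (rearr M f t) q * ennreal ((q / p) * t powr (q / p - 1)) \<partial>lborel)"

definition in_lorentz :: "real \<Rightarrow> real \<Rightarrow> 'a measure \<Rightarrow> ('a \<Rightarrow> 'b::real_normed_vector) \<Rightarrow> bool" where
  "in_lorentz p q M f \<longleftrightarrow> f \<in> borel_measurable M \<and> lorentz_integral p q M f < \<infinity>"

text \<open>Lorentz quasi-norm (meaningful when the integral is finite).\<close>
definition lorentz_norm :: "real \<Rightarrow> real \<Rightarrow> 'a measure \<Rightarrow> ('a \<Rightarrow> 'b::real_normed_vector) \<Rightarrow> real" where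
  "lorentz_norm p q M f = enn2real (lorentz_integral p q M f) powr (1 / q)"

end

theory Submission
  imports Defs
begin

lemma powr_tangent:
  fixes x y s :: real assumes "0 \<le> x" "0 \<le> y" "1 \<le> s"
  shows "y powr s + s * y powr (s-1) * (x - y) \<le> x powr s"
proof (cases "y = 0")
  case True then show ?thesis using assms by simp
next
  case y: False
  show ?thesis
  proof (cases "x = 0")
    case True
    have "y powr s = y powr (s-1) * y" using y assms by (simp add: powr_diff)
    then have "y powr s + s * y powr (s-1) * (0 - y) = (1 - s) * y powr s" by (simp add: algebra_simps)
    also have "\<dots> \<le> 0" using assms by (simp add: mult_nonpos_nonneg)
    finally show ?thesis using True assms by simp
  next
    case x: False
    have "s * y powr (s-1) * (x - y) \<le> x powr s - y powr s"
      using y x assms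
      by (intro convex_on_imp_above_tangent[where A = "{0<..}", OF powr_convex])
         (auto intro!: derivative_eq_intros simp: interior_open)
    then show ?thesis by simp
  qed
qed

lemma distr_antimono:
  assumes "f \<in> borel_measurable M" "x \<le> y"
  shows "distr_fun M f y \<le> distr_fun M f x"
  unfolding distr_fun_def using assms
  by (intro emeasure_mono) (auto, measurable)

lemma rearr_antimono:
  assumes "s \<le> t" shows "rearr M f t \<le> rearr M f s"
  unfolding rearr_def using assms
  by (intro Inf_superset_mono image_mono) (auto intro: order_trans ennreal_leI)

lemma rearr_step:
  assumes f: "f \<in> borel_measurable M"
    and "rearr M f t = ennreal a" "rearr M g t = ennreal b" "0 \<le> a" "a < \<tau>" "\<tau> < b"
    and "distr_fun M g \<tau> \<le> distr_fun M f \<tau>"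
  shows False
proof -
  have "Inf (ennreal ` {\<tau>::real. 0 < \<tau> \<and> distr_fun M f \<tau> \<le> ennreal t}) < ennreal \<tau>"
    using assms(2,4,5) unfolding rearr_def by (simp add: ennreal_lessI)
  then obtain \<tau>' where t': "0 < \<tau>'" "distr_fun M f \<tau>' \<le> ennreal t" "ennreal \<tau>' < ennreal \<tau>"
    by (auto simp: Inf_less_iff)
  then have "\<tau>' < \<tau>" by (simp add: ennreal_less_iff)
  then have "distr_fun M f \<tau> \<le> ennreal t" using distr_antimono[OF f, of \<tau>' \<tau>] t' by auto
  then have "distr_fun M g \<tau> \<le> ennreal t" using assms(7) by auto
  moreover have "0 < \<tau>" using assms by auto
  ultimately have "rearr M g t \<le> ennreal \<tau>" unfolding rearr_def by (auto intro: Inf_lower)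
  then have "b \<le> \<tau>" using assms(3) \<open>0 < \<tau>\<close> by (simp add: ennreal_le_iff)
  then show False using assms by auto
qed

lemma mv_ineq:
  fixes a b T q q0 :: real
  assumes "0 < q0" "q0 < q" "0 \<le> a" "0 \<le> b" "0 \<le> T"
    and cs: "(b \<le> a \<and> T \<le> b) \<or> (a \<le> b \<and> b \<le> T)"
  shows "(q/q0) * T powr (q-q0) * (a powr q0 - b powr q0) \<le> a powr q - b powr q"
proof -
  define s where "s = q/q0"
  have s1: "1 \<le> s" using assms by (simp add: s_def)
  have x: "(a powr q0) powr s = a powr q" using assms by (simp add: powr_powr s_def)
  have y: "(b powr q0) powr s = b powr q" using assms by (simp add: powr_powr s_def)
  have y1: "(b powr q0) powr (s - 1) = b powr (q - q0)" using assms
    by (simp add: powr_powr s_def algebra_simps diff_divide_distrib)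
  have tan: "b powr q + s * b powr (q - q0) * (a powr q0 - b powr q0) \<le> a powr q"
    using powr_tangent[of "a powr q0" "b powr q0" s] s1 x y y1 by simp
  from cs show ?thesis
  proof
    assume h: "b \<le> a \<and> T \<le> b"
    have "a powr q0 - b powr q0 \<ge> 0" using h assms by (simp add: powr_mono2)
    moreover have "T powr (q-q0) \<le> b powr (q-q0)" using h assms by (simp add: powr_mono2)
    ultimately have "s * T powr (q-q0) * (a powr q0 - b powr q0) \<le> s * b powr (q - q0) * (a powr q0 - b powr q0)"
      using s1 by (intro mult_right_mono mult_left_mono) auto
    then show ?thesis using tan by (simp add: s_def)
  next
    assume h: "a \<le> b \<and> b \<le> T"
    have "a powr q0 - b powr q0 \<le> 0" using h assms by (simp add: powr_mono2)
    moreover have "b powr (q-q0) \<le> T powr (q-q0)" using h assms by (simp add: powr_mono2)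
    ultimately have "s * T powr (q-q0) * (a powr q0 - b powr q0) \<le> s * b powr (q - q0) * (a powr q0 - b powr q0)"
      using s1 by (intro mult_right_mono_neg mult_left_mono) auto
    then show ?thesis using tan by (simp add: s_def)
  qed
qed

lemma nonneg_from_cmp:
  fixes u v :: "real \<Rightarrow> real" and c :: real and S :: "real set"
  assumes "c > 0" "set_integrable lborel S u" "\<And>t. t \<in> S \<Longrightarrow> c * v t \<le> u t"
    and le: "(\<integral>\<^sup>+ t. indicator S t * ennreal (- v t) \<partial>lborel) \<le> (\<integral>\<^sup>+ t. indicator S t * ennreal (v t) \<partial>lborel)"
  shows "0 \<le> (LINT t:S|lborel. u t)"
proof -
  define U where "U t = indicator S t * u t / c" for t
  have iU: "integrable lborel U" using assms(2) unfolding U_def set_integrable_def by simp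
  have 1: "(\<integral>\<^sup>+ t. indicator S t * ennreal (v t) \<partial>lborel) \<le> (\<integral>\<^sup>+ t. ennreal (U t) \<partial>lborel)"
  proof (intro nn_integral_mono)
    fix t show "indicator S t * ennreal (v t) \<le> ennreal (U t)"
    proof (cases "t \<in> S")
      case True then have "v t \<le> u t / c" using assms(1,3) by (simp add: field_simps mult.commute)
      then show ?thesis using True by (simp add: U_def ennreal_leI)
    qed simp
  qed
  have 2: "(\<integral>\<^sup>+ t. ennreal (- U t) \<partial>lborel) \<le> (\<integral>\<^sup>+ t. indicator S t * ennreal (- v t) \<partial>lborel)"
  proof (intro nn_integral_mono)
    fix t show "ennreal (- U t) \<le> indicator S t * ennreal (- v t)"
    proof (cases "t \<in> S")
      case True then have "v t \<le> u t / c" using assms(1,3) by (simp add: field_simps mult.commute)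
      then show ?thesis using True by (simp add: U_def ennreal_leI)
    qed (simp add: U_def)
  qed
  have fin: "(\<integral>\<^sup>+ t. ennreal (U t) \<partial>lborel) < \<infinity>" using iU by (simp add: real_integrable_def top.not_eq_extremum)
  have "enn2real (\<integral>\<^sup>+ t. ennreal (- U t) \<partial>lborel) \<le> enn2real (\<integral>\<^sup>+ t. ennreal (U t) \<partial>lborel)"
    using 1 2 le fin by (intro enn2real_mono) auto
  then have "0 \<le> integral\<^sup>L lborel U" using real_lebesgue_integral_def[OF iU] by simp
  moreover have "integral\<^sup>L lborel U = (LINT t:S|lborel. u t) / c"
    unfolding U_def set_lebesgue_integral_def by simp
  ultimately show ?thesis using assms(1) by (simp add: divide_nonneg_pos zero_le_divide_iff)
qed

lemma rearr_meas:
  assumes fin: "\<And>t. 0 < t \<Longrightarrow> rearr M f t < \<infinity>"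
  shows "(\<lambda>t. indicator {0<..} t * enn2real (rearr M f t)) \<in> borel_measurable borel"
proof -
  have "mono_on {0<..} (\<lambda>t. - enn2real (rearr M f t))"
    by (intro mono_onI) (auto intro!: enn2real_mono rearr_antimono fin[unfolded infinity_ennreal_def])
  then have "(\<lambda>t. - enn2real (rearr M f t)) \<in> borel_measurable (restrict_space borel {0<..})"
    by (rule borel_measurable_mono_on_fnc)
  then have "(\<lambda>t. - (- enn2real (rearr M f t))) \<in> borel_measurable (restrict_space borel {0<..})"
    by measurable
  then have "(\<lambda>t. indicator {0<..} t *\<^sub>R enn2real (rearr M f t)) \<in> borel_measurable borel"
    by (subst (asm) borel_measurable_restrict_space_iff) auto
  then show ?thesis by simp
qed

theorem mainTheorem4:
  fixes M :: "'a measure" and f g :: "'a \<Rightarrow> 'b::real_normed_vector"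
    and p0 q0 p q \<tau>0 :: real
  assumes "0 < p0" "0 < q0" "0 < p" "0 < q"
    and cases: "(q > q0 \<and> q / p = q0 / p0) \<or> (q = q0 \<and> p > p0)"
    and "sigma_finite_measure M"
    and "f \<in> borel_measurable M" "g \<in> borel_measurable M"
    and "0 < \<tau>0"
    and "\<And>\<tau>. 0 < \<tau> \<Longrightarrow> \<tau> < \<tau>0 \<Longrightarrow> distr_fun M f \<tau> \<le> distr_fun M g \<tau>"
    and "\<And>\<tau>. \<tau> > \<tau>0 \<Longrightarrow> distr_fun M f \<tau> \<ge> distr_fun M g \<tau>"
    and fin_f: "\<And>t. 0 < t \<Longrightarrow> rearr M f t < \<infinity>"
    and fin_g: "\<And>t. 0 < t \<Longrightarrow> rearr M g t < \<infinity>"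
    and exists0:
      "(\<integral>\<^sup>+ t. indicator {0<..} t * ennreal (- ((q0 / p0) * t powr (q0 / p0 - 1) *
           (enn2real (rearr M f t) powr q0 - enn2real (rearr M g t) powr q0))) \<partial>lborel) < \<infinity>"
    and nonneg0:
      "(\<integral>\<^sup>+ t. indicator {0<..} t * ennreal (- ((q0 / p0) * t powr (q0 / p0 - 1) *
           (enn2real (rearr M f t) powr q0 - enn2real (rearr M g t) powr q0))) \<partial>lborel)
       \<le> (\<integral>\<^sup>+ t. indicator {0<..} t * ennreal ((q0 / p0) * t powr (q0 / p0 - 1) *
           (enn2real (rearr M f t) powr q0 - enn2real (rearr M g t) powr q0)) \<partial>lborel)"
    and L1: "set_integrable lborel {0<..}
      (\<lambda>t. (enn2real (rearr M f t) powr q - enn2real (rearr M g t) powr q) * t powr (q / p - 1))"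
  shows "(LINT t:{0<..}|lborel. (q / p) * t powr (q / p - 1) *
            (enn2real (rearr M f t) powr q - enn2real (rearr M g t) powr q)) \<ge> 0
         \<and> (in_lorentz p q M f \<and> in_lorentz p q M g \<longrightarrow> lorentz_norm p q M g \<le> lorentz_norm p q M f)"
proof -
  note fm = assms(7) and gm = assms(8) and below = assms(10) and above = assms(11)
  define S :: "real set" where "S = {0<..}"
  define F where "F t = enn2real (rearr M f t)" for t
  define G where "G t = enn2real (rearr M g t)" for t
  have rf: "rearr M f t = ennreal (F t)" if "0 < t" for t
    using fin_f[OF that] by (simp add: F_def)
  have rg: "rearr M g t = ennreal (G t)" if "0 < t" for t
    using fin_g[OF that] by (simp add: G_def)
  have F0: "0 \<le> F t" "0 \<le> G t" for t by (simp_all add: F_def G_def)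
  have claimP: "\<tau>0 \<le> G t" if t: "0 < t" "G t < F t" for t
  proof (rule ccontr)
    assume "\<not> \<tau>0 \<le> G t"
    define \<tau> where "\<tau> = (G t + min (F t) \<tau>0) / 2"
    show False
    proof (rule rearr_step[OF gm rg[OF t(1)] rf[OF t(1)] F0(2)])
      show "G t < \<tau>" "\<tau> < F t" using t \<open>\<not> \<tau>0 \<le> G t\<close> by (auto simp: \<tau>_def)
      show "distr_fun M f \<tau> \<le> distr_fun M g \<tau>"
        using t \<open>\<not> \<tau>0 \<le> G t\<close> F0(2)[of t] by (intro below) (auto simp: \<tau>_def)
    qed
  qed
  have claimN: "G t \<le> \<tau>0" if t: "0 < t" "F t < G t" for t
  proof (rule ccontr)
    assume "\<not> G t \<le> \<tau>0"
    define \<tau> where "\<tau> = (max (F t) \<tau>0 + G t) / 2"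
    show False
    proof (rule rearr_step[OF fm rf[OF t(1)] rg[OF t(1)] F0(1)])
      show "F t < \<tau>" "\<tau> < G t" using t \<open>\<not> G t \<le> \<tau>0\<close> by (auto simp: \<tau>_def)
      show "distr_fun M g \<tau> \<le> distr_fun M f \<tau>"
        using t \<open>\<not> G t \<le> \<tau>0\<close> by (intro above) (auto simp: \<tau>_def)
    qed
  qed
  have Fanti: "F t \<le> F t'" if "0 < t'" "t' \<le> t" for t t'
    unfolding F_def using that fin_f[of t'] by (intro enn2real_mono rearr_antimono) auto
  have L1': "set_integrable lborel S (\<lambda>t. (F t powr q - G t powr q) * t powr (q/p-1))"
    using L1 by (simp add: F_def G_def S_def)
  have uI: "set_integrable lborel S (\<lambda>t. (q/p) * t powr (q/p-1) * (F t powr q - G t powr q))"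
    using set_integrable_mult_right[OF L1', of "q/p"] by (simp add: mult_ac)
  have nonneg0': "(\<integral>\<^sup>+ t. indicator S t * ennreal (- ((q0 / p0) * t powr (q0 / p0 - 1) *
           (F t powr q0 - G t powr q0))) \<partial>lborel)
       \<le> (\<integral>\<^sup>+ t. indicator S t * ennreal ((q0 / p0) * t powr (q0 / p0 - 1) *
           (F t powr q0 - G t powr q0)) \<partial>lborel)"
    using nonneg0 by (simp add: F_def G_def S_def)
  have part1: "0 \<le> (LINT t:S|lborel. (q/p) * t powr (q/p-1) * (F t powr q - G t powr q))"
    using cases
  proof
    assume ca: "q > q0 \<and> q / p = q0 / p0"
    show ?thesis
    proof (rule nonneg_from_cmp[OF _ uI _ nonneg0'])
      show "0 < (q/q0) * \<tau>0 powr (q-q0)" using assms(2,4,9) by simp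
      fix t assume "t \<in> S"
      then have t: "0 < t" by (simp add: S_def)
      have h: "(q/q0) * \<tau>0 powr (q-q0) * (F t powr q0 - G t powr q0) \<le> F t powr q - G t powr q"
      proof (cases "G t < F t")
        case True
        then show ?thesis using claimP[OF t True] ca assms(2,9) F0[of t]
          by (intro mv_ineq) auto
      next
        case False
        show ?thesis
        proof (cases "F t < G t")
          case True
          then show ?thesis using claimN[OF t True] ca assms(2,9) F0[of t]
            by (intro mv_ineq) auto
        next
          case False
          then have "F t = G t" using \<open>\<not> G t < F t\<close> by simp
          then show ?thesis by simp
        qed
      qed
      have "0 \<le> (q/p) * t powr (q/p-1)" using assms(3,4) by simp
      from mult_left_mono[OF h this]
      show "(q/q0) * \<tau>0 powr (q-q0) * ((q0 / p0) * t powr (q0 / p0 - 1) * (F t powr q0 - G t powr q0))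
          \<le> (q/p) * t powr (q/p-1) * (F t powr q - G t powr q)"
        unfolding ca[THEN conjunct2, symmetric] by (simp only: mult_ac)
    qed
  next
    assume cb: "q = q0 \<and> p > p0"
    then have qq: "q0 = q" and pp: "p0 < p" by auto
    define h where "h t = F t powr q - G t powr q" for t
    have hpos: "0 \<le> h t" if "G t \<le> F t" for t
      using that F0[of t] by (simp add: h_def powr_mono2 assms(4) less_imp_le)
    have hneg: "h t \<le> 0" if "F t \<le> G t" for t
      using that F0[of t] by (simp add: h_def powr_mono2 assms(4) less_imp_le)
    have sep: "t < t'" if "0 < t" "0 < t'" "G t < F t" "F t' < G t'" for t t'
    proof (rule ccontr)
      assume "\<not> t < t'"
      then have "F t \<le> F t'" using that by (intro Fanti) auto
      moreover have "G t' \<le> \<tau>0" "\<tau>0 \<le> G t" using claimN claimP that by auto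
      ultimately show False using that by linarith
    qed
    show ?thesis
    proof (cases "\<exists>t>0. F t < G t")
      case noN: False
      show ?thesis unfolding set_lebesgue_integral_def
      proof (intro integral_nonneg_AE AE_I2)
        fix t show "0 \<le> indicator S t *\<^sub>R ((q/p) * t powr (q/p-1) * (F t powr q - G t powr q))"
        proof (cases "t \<in> S")
          case True
          then have "G t \<le> F t" using noN by (auto simp: S_def)
          then show ?thesis using hpos[of t] True assms(3,4) by (simp add: h_def)
        qed simp
      qed
    next
      case N: True
      show ?thesis
      proof (cases "\<exists>t>0. G t < F t")
        case P: True
        define s0 where "s0 = Sup {t. 0 < t \<and> G t < F t}"
        obtain t1 where t1: "0 < t1" "G t1 < F t1" using P by auto
        obtain t2 where t2: "0 < t2" "F t2 < G t2" using N by auto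
        have bdd: "bdd_above {t. 0 < t \<and> G t < F t}"
          using sep t2 by (intro bdd_aboveI[of _ t2]) (auto intro: less_imp_le)
        have up: "t \<le> s0" if "0 < t" "G t < F t" for t
          unfolding s0_def using that bdd by (intro cSup_upper) auto
        have lo: "s0 \<le> t" if "0 < t" "F t < G t" for t
          unfolding s0_def using that t1 sep by (intro cSup_least) (auto intro: less_imp_le)
        have s0pos: "0 < s0" using up[OF t1] t1 by simp
        define e where "e = q/p - q/p0"
        have e0: "e \<le> 0" unfolding e_def using assms(1,3,4) pp
          by (simp add: divide_left_mono frac_le)
        show ?thesis
        proof (rule nonneg_from_cmp[OF _ uI _ nonneg0'])
          show "0 < (p0/p) * s0 powr e" using assms(1,3) s0pos by simp
          fix t assume "t \<in> S"
          then have t: "0 < t" by (simp add: S_def)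
          have key: "s0 powr e * h t \<le> t powr e * h t"
          proof (cases "G t < F t")
            case True
            then show ?thesis using up[OF t True] hpos[of t] powr_mono2'[OF e0 t, of s0]
              by (intro mult_right_mono) auto
          next
            case False
            show ?thesis
            proof (cases "F t < G t")
              case True
              then show ?thesis using lo[OF t True] hneg[of t] powr_mono2'[OF e0 s0pos, of t]
                by (intro mult_right_mono_neg) auto
            next
              case False
              then have "h t = 0" using \<open>\<not> G t < F t\<close> by (simp add: h_def)
              then show ?thesis by simp
            qed
          qed
          have "0 \<le> (q/p) * t powr (q/p0-1)" using assms(3,4) by simp
          from mult_left_mono[OF key this]
          have *: "(q/p) * t powr (q/p0-1) * (s0 powr e * h t) \<le> (q/p) * t powr (q/p0-1) * (t powr e * h t)" .
          have eq1: "(p0/p) * s0 powr e * ((q0 / p0) * t powr (q0 / p0 - 1) * (F t powr q0 - G t powr q0))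
              = (q/p) * t powr (q/p0-1) * (s0 powr e * h t)"
            using assms(1) by (simp add: qq h_def)
          have eq2: "(q/p) * t powr (q/p-1) * (F t powr q - G t powr q)
              = (q/p) * t powr (q/p0-1) * (t powr e * h t)"
          proof -
            have "t powr (q/p-1) = t powr (q/p0-1) * t powr e"
              using t by (simp add: e_def powr_add[symmetric])
            then show ?thesis by (simp add: h_def)
          qed
          show "(p0/p) * s0 powr e * ((q0 / p0) * t powr (q0 / p0 - 1) * (F t powr q0 - G t powr q0))
              \<le> (q/p) * t powr (q/p-1) * (F t powr q - G t powr q)"
            unfolding eq1 eq2 by (rule *)
        qed
      next
        case noP: False
        define v where "v t = (q0 / p0) * t powr (q0 / p0 - 1) * (F t powr q0 - G t powr q0)" for t
        have vh: "v t = (q/p0) * t powr (q/p0 - 1) * h t" for t by (simp add: v_def h_def qq)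
        have vle: "v t \<le> 0" if "t \<in> S" for t
        proof -
          have "h t \<le> 0" using noP that by (intro hneg) (force simp: S_def not_less)
          moreover have "0 \<le> (q/p0) * t powr (q/p0 - 1)" using assms(1,4) by simp
          ultimately show ?thesis unfolding vh by (intro mult_nonneg_nonpos)
        qed
        have "(\<lambda>t. indicator S t * ennreal (v t)) = (\<lambda>_. 0)"
          using vle by (auto simp: indicator_def fun_eq_iff ennreal_eq_0_iff)
        then have "(\<integral>\<^sup>+ t. indicator S t * ennreal (- v t) \<partial>lborel) = 0"
          using nonneg0' unfolding v_def[symmetric] by simp
        moreover
        have mF: "(\<lambda>t. indicator {0<..} t * F t) \<in> borel_measurable borel"
          unfolding F_def by (rule rearr_meas) (use fin_f in auto)
        have mG: "(\<lambda>t. indicator {0<..} t * G t) \<in> borel_measurable borel"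
          unfolding G_def by (rule rearr_meas) (use fin_g in auto)
        have meq: "(\<lambda>t. indicator S t * ennreal (- v t)) = (\<lambda>t. ennreal (indicator S t *
             (- ((q0 / p0) * t powr (q0 / p0 - 1) * ((indicator {0<..} t * F t) powr q0 - (indicator {0<..} t * G t) powr q0)))))"
          by (auto simp: fun_eq_iff indicator_def S_def v_def)
        have "(\<lambda>t. indicator S t * ennreal (- v t)) \<in> borel_measurable lborel"
          unfolding meq unfolding S_def using mF mG by measurable
        ultimately have AE0: "AE t in lborel. indicator S t * ennreal (- v t) = 0"
          by (simp add: nn_integral_0_iff_AE)
        show ?thesis unfolding set_lebesgue_integral_def
        proof (intro integral_nonneg_AE eventually_mono[OF AE0])
          fix t assume z: "indicator S t * ennreal (- v t) = 0"
          show "0 \<le> indicator S t *\<^sub>R ((q/p) * t powr (q/p-1) * (F t powr q - G t powr q))"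
          proof (cases "t \<in> S")
            case True
            then have "0 \<le> v t" using z by (simp add: ennreal_eq_0_iff)
            moreover have "0 < (q/p0) * t powr (q/p0 - 1)" using assms(1,4) True by (simp add: S_def)
            ultimately have "0 \<le> h t" unfolding vh by (metis mult_pos_neg not_le)
            then show ?thesis using True assms(3,4) by (simp add: h_def)
          qed simp
        qed
      qed
    qed
  qed
  have part2: "lorentz_norm p q M g \<le> lorentz_norm p q M f"
    if lf: "in_lorentz p q M f" and lg: "in_lorentz p q M g"
  proof -
    define w where "w t = (q/p) * t powr (q/p-1)" for t
    have w0: "0 \<le> w t" for t using assms(3,4) by (simp add: w_def)
    have mF: "(\<lambda>t. indicator {0<..} t * F t) \<in> borel_measurable borel"
      unfolding F_def by (rule rearr_meas) (use fin_f in auto)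
    have mG: "(\<lambda>t. indicator {0<..} t * G t) \<in> borel_measurable borel"
      unfolding G_def by (rule rearr_meas) (use fin_g in auto)
    have gen: "integrable lborel (\<lambda>t. indicator S t * (w t * H t powr q))
        \<and> lorentz_integral p q M h = (\<integral>\<^sup>+ t. ennreal (indicator S t * (w t * H t powr q)) \<partial>lborel)"
      if H: "H = (\<lambda>t. enn2real (rearr M h t))" and rh: "\<And>t. 0 < t \<Longrightarrow> rearr M h t = ennreal (H t)"
        and mH: "(\<lambda>t. indicator {0<..} t * H t) \<in> borel_measurable borel"
        and lh: "in_lorentz p q M h" for H and h :: "'a \<Rightarrow> 'b"
    proof
      have eq: "lorentz_integral p q M h = (\<integral>\<^sup>+ t. ennreal (indicator S t * (w t * H t powr q)) \<partial>lborel)"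
        unfolding lorentz_integral_def
      proof (intro nn_integral_cong)
        fix t show "indicator {0<..} t * epowr (rearr M h t) q * ennreal (q / p * t powr (q / p - 1))
              = ennreal (indicator S t * (w t * H t powr q))"
        proof (cases "0 < t")
          case True
          have e: "epowr (rearr M h t) q = ennreal (H t powr q)"
          proof -
            have "0 \<le> H t" by (simp add: H)
            then show ?thesis unfolding epowr_def rh[OF True] by simp
          qed
          have m: "ennreal (H t powr q) * ennreal (w t) = ennreal (w t * H t powr q)"
            using w0[of t] by (simp add: ennreal_mult[symmetric] mult.commute)
          show ?thesis using True m by (simp add: e S_def w_def)
        qed (simp add: S_def)
      qed
      show "lorentz_integral p q M h = (\<integral>\<^sup>+ t. ennreal (indicator S t * (w t * H t powr q)) \<partial>lborel)"
        by (rule eq)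
      have meq: "(\<lambda>t. indicator S t * (w t * H t powr q)) = (\<lambda>t. indicator S t * (w t * (indicator {0<..} t * H t) powr q))"
        by (auto simp: S_def indicator_def)
      show "integrable lborel (\<lambda>t. indicator S t * (w t * H t powr q))"
      proof (rule integrableI_nonneg)
        show "(\<lambda>t. indicator S t * (w t * H t powr q)) \<in> borel_measurable lborel"
          unfolding meq unfolding w_def S_def using mH by measurable
        show "AE t in lborel. 0 \<le> indicator S t * (w t * H t powr q)" using w0 by auto
        show "(\<integral>\<^sup>+ t. ennreal (indicator S t * (w t * H t powr q)) \<partial>lborel) < \<infinity>"
          using lh eq by (simp add: in_lorentz_def)
      qed
    qed
    have Feq: "F = (\<lambda>t. enn2real (rearr M f t))" and Geq: "G = (\<lambda>t. enn2real (rearr M g t))"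
      by (simp_all add: F_def G_def fun_eq_iff)
    note gf = gen[OF Feq rf mF lf] and gg = gen[OF Geq rg mG lg]
    have i1: "integral\<^sup>L lborel (\<lambda>t. indicator S t * (w t * F t powr q)) = enn2real (lorentz_integral p q M f)"
      using gf w0 by (subst integral_eq_nn_integral) (auto intro: borel_measurable_integrable)
    have i2: "integral\<^sup>L lborel (\<lambda>t. indicator S t * (w t * G t powr q)) = enn2real (lorentz_integral p q M g)"
      using gg w0 by (subst integral_eq_nn_integral) (auto intro: borel_measurable_integrable)
    have "(LINT t:S|lborel. (q/p) * t powr (q/p-1) * (F t powr q - G t powr q))
        = integral\<^sup>L lborel (\<lambda>t. indicator S t * (w t * F t powr q) - indicator S t * (w t * G t powr q))"
      unfolding set_lebesgue_integral_def by (intro arg_cong[where f="integral\<^sup>L lborel"] ext) (simp add: w_def right_diff_distrib mult_ac diff_divide_distrib)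
    also have "\<dots> = enn2real (lorentz_integral p q M f) - enn2real (lorentz_integral p q M g)"
      using gf gg i1 i2 by (simp add: F_def G_def)
    finally have "enn2real (lorentz_integral p q M g) \<le> enn2real (lorentz_integral p q M f)"
      using part1 by simp
    then show ?thesis unfolding lorentz_norm_def using assms(4)
      by (intro powr_mono2) auto
  qed
  show ?thesis using part1 part2 by (simp add: F_def G_def S_def)
qed

end
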